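(* Let $G$ be a finitely generated virtually nilpotent group, $A\le\operatorname{Aut}(G)$ with $|A|=n$, and let $X=(G,A)$ be the $n$-valued coset group. Then for every $z\in X$ and every $y\in X$ the growth function $\xi_y(r)$ of the $n$-valued dynamic $T_z$ at $y$ has polynomial growth, i.e. there are $C,k>0$ with $\xi_y(r)\le Cr^k$ for all $r\ge1$.
   Context: An $n$-valued group is a set $X$ with an associative $n$-valued multiplication $*:X\times X\to\operatorname{Sym}^nX$ (values are $n$-multi-sets), with unit and inverse, as in Buchstaber's definition; multiplication is extended to multi-sets elementwise with multiplicities. Coset group: for a group $G$ and finite $A\le\operatorname{Aut}(G)$ with $|A|=n$, $X=G/A$ is the set of $A$-orbits with projection $\pi$, and $\pi(g)*\pi(h)=[\pi(g\,a(h)):a\in A]$, unit $\pi(e_G)$, $\operatorname{inv}(\pi(g))=\pi(g^{-1})$. For $z\in X$ the $n$-valued dynamic $T_z$ is $T_z(y)=y*z$, iterated by $T_z^k(y)=T_z^{k-1}(y)*z$. For a multi-set $M$, $\operatorname{Set}(M)$ is the set of distinct elements of $M$. The growth function of $T_z$ at $y$ is $\xi_y(r)=|\operatorname{Set}(T_z^r(y))|$. A group is virtually nilpotent if it has a nilpotent subgroup of finite index. *)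

theory Defs
  imports "HOL-Algebra.Algebra" "HOL-Library.Multiset"
begin

definition fin_gen_group :: "('a, 'b) monoid_scheme \<Rightarrow> bool" where
  "fin_gen_group G \<longleftrightarrow> (\<exists>S. finite S \<and> S \<subseteq> carrier G \<and> generate G S = carrier G)"

fun lower_central :: "('a, 'b) monoid_scheme \<Rightarrow> nat \<Rightarrow> 'a set" where
  "lower_central G 0 = carrier G"
| "lower_central G (Suc i) =
     generate G {x \<otimes>\<^bsub>G\<^esub> y \<otimes>\<^bsub>G\<^esub> inv\<^bsub>G\<^esub> x \<otimes>\<^bsub>G\<^esub> inv\<^bsub>G\<^esub> y |
                 x y. x \<in> lower_central G i \<and> y \<in> carrier G}"

definition nilpotent_group :: "('a, 'b) monoid_scheme \<Rightarrow> bool" where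
  "nilpotent_group G \<longleftrightarrow> group G \<and> (\<exists>c. lower_central G c = {\<one>\<^bsub>G\<^esub>})"

definition virtually_nilpotent :: "('a, 'b) monoid_scheme \<Rightarrow> bool" where
  "virtually_nilpotent G \<longleftrightarrow>
     (\<exists>H. subgroup H G \<and> finite (rcosets\<^bsub>G\<^esub> H) \<and> nilpotent_group (G\<lparr>carrier := H\<rparr>))"

text \<open>The A-orbit of g, i.e. the projection pi(g).\<close>
definition orb :: "('a \<Rightarrow> 'a) set \<Rightarrow> 'a \<Rightarrow> 'a set" where
  "orb A g = (\<lambda>a. a g) ` A"

definition coset_space :: "('a, 'b) monoid_scheme \<Rightarrow> ('a \<Rightarrow> 'a) set \<Rightarrow> 'a set set" where
  "coset_space G A = orb A ` carrier G"

definition cmult :: "('a, 'b) monoid_scheme \<Rightarrow> ('a \<Rightarrow> 'a) set \<Rightarrow> 'a set \<Rightarrow> 'a set \<Rightarrow> 'a set multiset" where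
  "cmult G A x w =
     (let g = (SOME g. g \<in> carrier G \<and> orb A g = x);
          h = (SOME h. h \<in> carrier G \<and> orb A h = w)
      in image_mset (\<lambda>a. orb A (g \<otimes>\<^bsub>G\<^esub> a h)) (mset_set A))"

definition cmult_mset :: "('a, 'b) monoid_scheme \<Rightarrow> ('a \<Rightarrow> 'a) set \<Rightarrow> 'a set multiset \<Rightarrow> 'a set \<Rightarrow> 'a set multiset" where
  "cmult_mset G A M w = sum_mset (image_mset (\<lambda>x. cmult G A x w) M)"

fun dyn_iter :: "('a, 'b) monoid_scheme \<Rightarrow> ('a \<Rightarrow> 'a) set \<Rightarrow> 'a set \<Rightarrow> nat \<Rightarrow> 'a set \<Rightarrow> 'a set multiset" where
  "dyn_iter G A z 0 y = {#y#}"
| "dyn_iter G A z (Suc k) y = cmult_mset G A (dyn_iter G A z k y) z"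

definition growth :: "('a, 'b) monoid_scheme \<Rightarrow> ('a \<Rightarrow> 'a) set \<Rightarrow> 'a set \<Rightarrow> 'a set \<Rightarrow> nat \<Rightarrow> nat" where
  "growth G A z y r = card (set_mset (dyn_iter G A z r y))"

end

theory Submission
  imports Defs
begin

definition cm :: "('a,'b) monoid_scheme \<Rightarrow> 'a \<Rightarrow> 'a \<Rightarrow> 'a" where
  "cm G x g = inv\<^bsub>G\<^esub> x \<otimes>\<^bsub>G\<^esub> inv\<^bsub>G\<^esub> g \<otimes>\<^bsub>G\<^esub> x \<otimes>\<^bsub>G\<^esub> g"

fun EE :: "('a,'b) monoid_scheme \<Rightarrow> 'a set \<Rightarrow> nat \<Rightarrow> 'a set" where
  "EE G S 0 = S"
| "EE G S (Suc h) = EE G S h \<union> {cm G x y | x y. x \<in> EE G S h \<and> y \<in> EE G S h}"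

definition conj1 :: "('a,'b) monoid_scheme \<Rightarrow> nat \<Rightarrow> 'a \<Rightarrow> (nat \<times> 'a) list \<Rightarrow> (nat \<times> 'a) list" where
  "conj1 G c g u = concat (map (\<lambda>(h,x). if Suc h < c then [(h,x),(Suc h, cm G x g)] else [(h,x)]) u)"

definition wprod :: "('a,'b) monoid_scheme \<Rightarrow> (nat \<times> 'a) list \<Rightarrow> 'a" where
  "wprod G u = foldr (\<lambda>l acc. snd l \<otimes>\<^bsub>G\<^esub> acc) u \<one>\<^bsub>G\<^esub>"

lemma wprod_Nil[simp]: "wprod G [] = \<one>\<^bsub>G\<^esub>" by (simp add: wprod_def)
lemma wprod_Cons[simp]: "wprod G (l # u) = snd l \<otimes>\<^bsub>G\<^esub> wprod G u" by (simp add: wprod_def)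

lemma conj1_Nil[simp]: "conj1 G c g [] = []" by (simp add: conj1_def)
lemma conj1_Cons: "conj1 G c g ((h,x) # u) =
   (if Suc h < c then [(h,x),(Suc h, cm G x g)] else [(h,x)]) @ conj1 G c g u"
  by (simp add: conj1_def)
lemma conj1_append: "conj1 G c g (u @ w) = conj1 G c g u @ conj1 G c g w"
  by (simp add: conj1_def)
lemma conjn_append: "(conj1 G c g ^^ n) (u @ w) = (conj1 G c g ^^ n) u @ (conj1 G c g ^^ n) w"
  by (induction n) (auto simp: conj1_append)

fun coll :: "('a,'b) monoid_scheme \<Rightarrow> nat \<Rightarrow> nat \<Rightarrow> 'a \<Rightarrow> (nat \<times> 'a) list \<Rightarrow> nat \<times> (nat \<times> 'a) list" where
  "coll G c hg g [] = (0, [])"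
| "coll G c hg g (l # v) = (case coll G c hg g v of (a, r) \<Rightarrow>
      if l = (hg, g) then (Suc a, r) else (a, (conj1 G c g ^^ a) [l] @ r))"

fun ppow :: "('a,'b) monoid_scheme \<Rightarrow> 'a list \<Rightarrow> nat list \<Rightarrow> 'a" where
  "ppow G (e # es) (a # as) = e [^]\<^bsub>G\<^esub> a \<otimes>\<^bsub>G\<^esub> ppow G es as"
| "ppow G _ _ = \<one>\<^bsub>G\<^esub>"

definition valid :: "('a,'b) monoid_scheme \<Rightarrow> 'a set \<Rightarrow> nat \<times> 'a \<Rightarrow> bool" where
  "valid G S l \<longleftrightarrow> snd l \<in> EE G S (fst l) \<and> snd l \<in> lower_central G (fst l)"

lemma EE_mono: "h \<le> h' \<Longrightarrow> EE G S h \<subseteq> EE G S h'"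
  by (induction h' rule: dec_induct) auto

lemma EE_finite: "finite S \<Longrightarrow> finite (EE G S h)"
  by (induction h) (auto intro: finite_image_set2)

lemma conjn_Suc: "(conj1 G c g ^^ Suc j) u = (conj1 G c g ^^ j) (conj1 G c g u)"
  by (simp only: funpow_Suc_right o_apply)

lemma conjn_len: "length ((conj1 G c g ^^ j) [(h,x)]) \<le> (j+1)^(c-h)"
proof (induction j arbitrary: h x)
  case 0 then show ?case by simp
next
  case (Suc j)
  show ?case
  proof (cases "Suc h < c")
    case True
    then obtain m where m: "c - h = Suc m" "c - Suc h = m" by (intro that[of "c - Suc h"]) auto
    have e: "conj1 G c g [(h,x)] = [(h,x)] @ [(Suc h, cm G x g)]" using True by (simp add: conj1_Cons)
    have "length ((conj1 G c g ^^ Suc j) [(h,x)]) =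
       length ((conj1 G c g ^^ j) [(h,x)]) + length ((conj1 G c g ^^ j) [(Suc h, cm G x g)])"
      unfolding conjn_Suc e conjn_append by simp
    also have "\<dots> \<le> (j+1)^(Suc m) + (j+1)^m" using Suc.IH[of h x] Suc.IH[of "Suc h"] m by (intro add_mono) auto
    also have "\<dots> = (j+2) * (j+1)^m" by simp
    also have "\<dots> \<le> (j+2) * (j+2)^m" by (intro mult_le_mono2 power_mono) auto
    finally show ?thesis using m by simp
  next
    case False
    have e: "conj1 G c g [(h,x)] = [(h,x)]" using False by (simp add: conj1_Cons)
    have "length ((conj1 G c g ^^ Suc j) [(h,x)]) = length ((conj1 G c g ^^ j) [(h,x)])"
      unfolding conjn_Suc e by simp
    also have "\<dots> \<le> (j+1)^(c-h)" by (rule Suc.IH)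
    also have "\<dots> \<le> (Suc j+1)^(c-h)" by (intro power_mono) auto
    finally show ?thesis .
  qed
qed

definition el :: "('a,'b) monoid_scheme \<Rightarrow> 'a set \<Rightarrow> nat \<Rightarrow> 'a list" where
  "el G S h = (SOME xs. set xs = EE G S h)"

definition tsf :: "('a,'b) monoid_scheme \<Rightarrow> 'a set \<Rightarrow> nat \<Rightarrow> (nat \<times> 'a) list" where
  "tsf G S n = concat (map (\<lambda>h. map (Pair h) (el G S h)) [0..<n])"

definition listprod :: "('a,'b) monoid_scheme \<Rightarrow> 'a list \<Rightarrow> 'a" where
  "listprod G ws = foldr (\<lambda>x acc. x \<otimes>\<^bsub>G\<^esub> acc) ws \<one>\<^bsub>G\<^esub>"

definition PS :: "('a,'b) monoid_scheme \<Rightarrow> 'a set \<Rightarrow> nat \<Rightarrow> 'a set" where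
  "PS G S k = {listprod G ws | ws. set ws \<subseteq> S \<and> length ws = k}"

lemma set_el: "finite S \<Longrightarrow> set (el G S h) = EE G S h"
proof -
  assume "finite S"
  then have "\<exists>xs. set xs = EE G S h" by (intro finite_list EE_finite)
  then show ?thesis unfolding el_def by (rule someI_ex)
qed

lemma set_tsf: "finite S \<Longrightarrow> set (tsf G S n) = {(h,e). h < n \<and> e \<in> EE G S h}"
  unfolding tsf_def by (auto simp add: set_el)

lemma sorted_tsf: "sorted (map fst (tsf G S n))"
proof (induction n)
  case 0 then show ?case by (simp add: tsf_def)
next
  case (Suc n)
  have e: "tsf G S (Suc n) = tsf G S n @ map (Pair n) (el G S n)" by (simp add: tsf_def)
  have "\<forall>l\<in>set (tsf G S n). fst l < n" by (auto simp: tsf_def)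
  moreover have "map fst (map (Pair n) xs) = replicate (length xs) n" for xs :: "'a list" by (induction xs) auto
  ultimately show ?case unfolding e using Suc by (auto simp: sorted_append)
qed

lemma wprod_map0: "wprod G (map (Pair 0) ws) = listprod G ws"
  by (induction ws) (auto simp: listprod_def)

lemma auto_facts:
  assumes G: "group G" and A: "subgroup A (AutoGroup G)"
  shows "\<And>a. a \<in> A \<Longrightarrow> a \<in> hom G G"
    and "(\<lambda>x\<in>carrier G. x) \<in> A"
    and "\<And>a b x. a \<in> A \<Longrightarrow> b \<in> A \<Longrightarrow> x \<in> carrier G \<Longrightarrow> a \<otimes>\<^bsub>AutoGroup G\<^esub> b \<in> A \<and> (a \<otimes>\<^bsub>AutoGroup G\<^esub> b) x = a (b x)"
    and "\<And>a. a \<in> A \<Longrightarrow> inv\<^bsub>AutoGroup G\<^esub> a \<in> A"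
    and "\<And>a b. a \<in> A \<Longrightarrow> b \<in> A \<Longrightarrow> a \<otimes>\<^bsub>AutoGroup G\<^esub> (inv\<^bsub>AutoGroup G\<^esub> a \<otimes>\<^bsub>AutoGroup G\<^esub> b) = b"
    and "\<And>a b. a \<in> A \<Longrightarrow> b \<in> A \<Longrightarrow> a \<otimes>\<^bsub>AutoGroup G\<^esub> inv\<^bsub>AutoGroup G\<^esub> a \<otimes>\<^bsub>AutoGroup G\<^esub> b = b"
proof -
  interpret AG: group "AutoGroup G" using group.AutoGroup[OF G] .
  have AA: "A \<subseteq> auto G" using subgroup.subset[OF A] by (simp add: AutoGroup_def)
  show "\<And>a. a \<in> A \<Longrightarrow> a \<in> hom G G" using AA by (auto simp: auto_def)
  show "(\<lambda>x\<in>carrier G. x) \<in> A" using subgroup.one_closed[OF A] by (simp add: AutoGroup_def BijGroup_def)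
  show "\<And>a b x. a \<in> A \<Longrightarrow> b \<in> A \<Longrightarrow> x \<in> carrier G \<Longrightarrow> a \<otimes>\<^bsub>AutoGroup G\<^esub> b \<in> A \<and> (a \<otimes>\<^bsub>AutoGroup G\<^esub> b) x = a (b x)"
  proof -
    fix a b x assume ab: "a \<in> A" "b \<in> A" "x \<in> carrier G"
    have "a \<in> Bij (carrier G)" "b \<in> Bij (carrier G)" using ab AA by (auto simp: auto_def)
    then have "(a \<otimes>\<^bsub>AutoGroup G\<^esub> b) x = a (b x)" using ab(3)
      by (simp add: AutoGroup_def BijGroup_def compose_def)
    then show "a \<otimes>\<^bsub>AutoGroup G\<^esub> b \<in> A \<and> (a \<otimes>\<^bsub>AutoGroup G\<^esub> b) x = a (b x)"
      using subgroup.m_closed[OF A ab(1,2)] by simp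
  qed
  show "\<And>a. a \<in> A \<Longrightarrow> inv\<^bsub>AutoGroup G\<^esub> a \<in> A" using subgroup.m_inv_closed[OF A] by blast
  show "\<And>a b. a \<in> A \<Longrightarrow> b \<in> A \<Longrightarrow> a \<otimes>\<^bsub>AutoGroup G\<^esub> (inv\<^bsub>AutoGroup G\<^esub> a \<otimes>\<^bsub>AutoGroup G\<^esub> b) = b"
  proof -
    fix a b assume ab: "a \<in> A" "b \<in> A"
    then have "a \<in> carrier (AutoGroup G)" "b \<in> carrier (AutoGroup G)" using subgroup.subset[OF A] by auto
    then show "a \<otimes>\<^bsub>AutoGroup G\<^esub> (inv\<^bsub>AutoGroup G\<^esub> a \<otimes>\<^bsub>AutoGroup G\<^esub> b) = b"
      by (simp add: AG.m_assoc[symmetric])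
  qed
  show "\<And>a b. a \<in> A \<Longrightarrow> b \<in> A \<Longrightarrow> a \<otimes>\<^bsub>AutoGroup G\<^esub> inv\<^bsub>AutoGroup G\<^esub> a \<otimes>\<^bsub>AutoGroup G\<^esub> b = b"
  proof -
    fix a b assume ab: "a \<in> A" "b \<in> A"
    then have "a \<in> carrier (AutoGroup G)" "b \<in> carrier (AutoGroup G)" using subgroup.subset[OF A] by auto
    then show "a \<otimes>\<^bsub>AutoGroup G\<^esub> inv\<^bsub>AutoGroup G\<^esub> a \<otimes>\<^bsub>AutoGroup G\<^esub> b = b"
      by simp
  qed
qed

lemma orb_self: "group G \<Longrightarrow> subgroup A (AutoGroup G) \<Longrightarrow> g \<in> carrier G \<Longrightarrow> g \<in> orb A g"
  using auto_facts(2)[of G A] unfolding orb_def by (intro image_eqI[of _ _ "\<lambda>x\<in>carrier G. x"]) auto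

lemma orb_shift:
  assumes G: "group G" and A: "subgroup A (AutoGroup G)" and b: "b \<in> A" and w: "w \<in> carrier G"
  shows "orb A (b w) = orb A w"
proof
  show "orb A (b w) \<subseteq> orb A w"
  proof
    fix y assume "y \<in> orb A (b w)"
    then obtain a where a: "a \<in> A" "y = a (b w)" unfolding orb_def by blast
    then have "y = (a \<otimes>\<^bsub>AutoGroup G\<^esub> b) w" "a \<otimes>\<^bsub>AutoGroup G\<^esub> b \<in> A"
      using auto_facts(3)[OF G A a(1) b w] by auto
    then show "y \<in> orb A w" unfolding orb_def by blast
  qed
next
  show "orb A w \<subseteq> orb A (b w)"
  proof
    fix y assume "y \<in> orb A w"
    then obtain a where a: "a \<in> A" "y = a w" unfolding orb_def by blast
    define ib where "ib = inv\<^bsub>AutoGroup G\<^esub> b"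
    have ib: "ib \<in> A" using auto_facts(4)[OF G A b] ib_def by simp
    have bw: "b w \<in> carrier G" using auto_facts(1)[OF G A b] w by (auto simp: hom_def)
    have "(ib \<otimes>\<^bsub>AutoGroup G\<^esub> b) w = w"
    proof -
      have "ib \<otimes>\<^bsub>AutoGroup G\<^esub> b = \<one>\<^bsub>AutoGroup G\<^esub>"
        using b subgroup.subset[OF A] group.l_inv[OF group.AutoGroup[OF G]] ib_def by auto
      then show ?thesis using w by (simp add: AutoGroup_def BijGroup_def)
    qed
    then have "ib (b w) = w" using auto_facts(3)[OF G A ib b w] by simp
    then have "y = (a \<otimes>\<^bsub>AutoGroup G\<^esub> ib) (b w)" "a \<otimes>\<^bsub>AutoGroup G\<^esub> ib \<in> A"
      using auto_facts(3)[OF G A a(1) ib bw] a by auto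
    then show "y \<in> orb A (b w)" unfolding orb_def by blast
  qed
qed

context group
begin

lemma lc_sub: "lower_central G h \<subseteq> carrier G \<and> subgroup (lower_central G h) G"
proof (induction h)
  case 0 then show ?case by (simp add: subgroup_self)
next
  case (Suc h)
  have "{x \<otimes> y \<otimes> inv x \<otimes> inv y |x y. x \<in> lower_central G h \<and> y \<in> carrier G} \<subseteq> carrier G"
    using Suc by blast
  then show ?case using generate_is_subgroup generate_incl by simp
qed

lemma lc_triv: assumes "lower_central G c = {\<one>}" "c \<le> h" shows "lower_central G h = {\<one>}"
  using assms(2)
proof (induction h rule: dec_induct)
  case base then show ?case using assms by simp
next
  case (step h)
  have A: "{x \<otimes> y \<otimes> inv x \<otimes> inv y |x y. x \<in> lower_central G h \<and> y \<in> carrier G} = {\<one>}"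
    (is "?A = _")
  proof
    show "?A \<subseteq> {\<one>}" using step by clarsimp
    have "\<one> \<otimes> \<one> \<otimes> inv \<one> \<otimes> inv \<one> \<in> ?A" using step by blast
    then show "{\<one>} \<subseteq> ?A" by simp
  qed
  have "generate G {\<one>} = {\<one>}"
  proof
    show "generate G {\<one>} \<subseteq> {\<one>}"
      by (rule generate_subgroup_incl) (simp_all add: triv_subgroup)
  qed (auto intro: generate.one)
  then show ?case by (simp only: lower_central.simps A)
qed

lemma cm_mem: assumes "x \<in> lower_central G h" "g \<in> carrier G"
  shows "cm G x g \<in> lower_central G (Suc h)"
proof -
  have xc: "x \<in> carrier G" using assms(1) lc_sub by blast
  have ix: "inv x \<in> lower_central G h" using assms(1) lc_sub subgroup.m_inv_closed by metis
  have e: "cm G x g = inv x \<otimes> inv g \<otimes> inv (inv x) \<otimes> inv (inv g)"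
    using xc assms(2) by (simp only: cm_def inv_inv)
  have "cm G x g \<in> {x \<otimes> y \<otimes> inv x \<otimes> inv y |x y. x \<in> lower_central G h \<and> y \<in> carrier G}"
    unfolding e using ix assms(2) by (intro CollectI exI[of _ "inv x"] exI[of _ "inv g"] conjI refl ix) (simp add: assms(2))
  then show ?thesis
    unfolding lower_central.simps by (rule generate.incl)
qed

lemma inv_cancel_ll: "x \<in> carrier G \<Longrightarrow> y \<in> carrier G \<Longrightarrow> x \<otimes> (inv x \<otimes> y) = y"
  by (simp add: m_assoc[symmetric])
lemma inv_cancel_ll': "x \<in> carrier G \<Longrightarrow> y \<in> carrier G \<Longrightarrow> inv x \<otimes> (x \<otimes> y) = y"
  by (simp add: m_assoc[symmetric])

lemma x_cm: "x \<in> carrier G \<Longrightarrow> g \<in> carrier G \<Longrightarrow> x \<otimes> cm G x g = inv g \<otimes> x \<otimes> g"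
  by (simp add: cm_def m_assoc inv_cancel_ll)

lemma cm_closed: "x \<in> carrier G \<Longrightarrow> g \<in> carrier G \<Longrightarrow> cm G x g \<in> carrier G"
  by (simp add: cm_def)

lemma wprod_closed: "\<forall>l\<in>set u. snd l \<in> carrier G \<Longrightarrow> wprod G u \<in> carrier G"
  by (induction u) auto

lemma lc_carrier: "x \<in> lower_central G h \<Longrightarrow> x \<in> carrier G"
  using lc_sub by blast

lemma wprod_append: "\<forall>l\<in>set u. snd l \<in> carrier G \<Longrightarrow> \<forall>l\<in>set w. snd l \<in> carrier G \<Longrightarrow>
   wprod G (u @ w) = wprod G u \<otimes> wprod G w"
  by (induction u) (auto simp: m_assoc wprod_closed)

lemma conj1_prod:
  assumes triv: "lower_central G c = {\<one>}" and g: "g \<in> carrier G"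
    and u: "\<forall>l\<in>set u. snd l \<in> lower_central G (fst l)"
  shows "wprod G (conj1 G c g u) = inv g \<otimes> wprod G u \<otimes> g"
  using u
proof (induction u)
  case Nil then show ?case using g by simp
next
  case (Cons l u)
  obtain h x where l: "l = (h,x)" by (cases l)
  have x: "x \<in> lower_central G h" using Cons.prems l by auto
  have xc: "x \<in> carrier G" using x lc_carrier by blast
  have uc: "\<forall>l\<in>set u. snd l \<in> carrier G" using Cons.prems lc_carrier by auto
  have IH: "wprod G (conj1 G c g u) = inv g \<otimes> wprod G u \<otimes> g" using Cons by auto
  have P: "wprod G u \<in> carrier G" using uc wprod_closed by blast
  have key: "x \<otimes> (inv g \<otimes> wprod G u \<otimes> g) = inv g \<otimes> x \<otimes> g \<otimes> (inv g \<otimes> wprod G u \<otimes> g)"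
    if "x = inv g \<otimes> x \<otimes> g" using that by simp
  show ?case
  proof (cases "Suc h < c")
    case True
    then have "wprod G (conj1 G c g (l # u)) = x \<otimes> (cm G x g \<otimes> (inv g \<otimes> wprod G u \<otimes> g))"
      by (simp add: l conj1_Cons IH)
    also have "\<dots> = (x \<otimes> cm G x g) \<otimes> (inv g \<otimes> wprod G u \<otimes> g)"
      using xc g P cm_closed by (simp add: m_assoc)
    also have "\<dots> = inv g \<otimes> (x \<otimes> wprod G u) \<otimes> g"
      using xc g P by (simp add: x_cm m_assoc inv_cancel_ll)
    finally show ?thesis by (simp add: l)
  next
    case False
    have "cm G x g \<in> lower_central G (Suc h)" using cm_mem x g by blast
    then have "cm G x g = \<one>" using lc_triv[OF triv, of "Suc h"] False by simp
    then have "x \<otimes> cm G x g = x" using xc by simp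
    then have xe: "x = inv g \<otimes> x \<otimes> g" using x_cm xc g by simp
    have "wprod G (conj1 G c g (l # u)) = x \<otimes> (inv g \<otimes> wprod G u \<otimes> g)"
      using False by (simp add: l conj1_Cons IH)
    also have "\<dots> = inv g \<otimes> x \<otimes> g \<otimes> (inv g \<otimes> wprod G u \<otimes> g)"
      using xe by (rule key)
    also have "\<dots> = inv g \<otimes> (x \<otimes> wprod G u) \<otimes> g"
      using xc g P by (simp add: m_assoc inv_cancel_ll)
    finally show ?thesis by (simp add: l)
  qed
qed

declare lower_central.simps(2)[simp del]

lemma EE_carrier: "S \<subseteq> carrier G \<Longrightarrow> EE G S h \<subseteq> carrier G"
  by (induction h) (auto intro!: cm_closed)

lemma conj1_lc: "g \<in> carrier G \<Longrightarrow> \<forall>l\<in>set u. snd l \<in> lower_central G (fst l) \<Longrightarrow>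
   \<forall>l\<in>set (conj1 G c g u). snd l \<in> lower_central G (fst l)"
proof (induction u)
  case (Cons l u)
  then show ?case by (cases l) (auto simp: conj1_Cons simp del: lower_central.simps intro: cm_mem)
qed simp

lemma conjn_lc: "g \<in> carrier G \<Longrightarrow> \<forall>l\<in>set u. snd l \<in> lower_central G (fst l) \<Longrightarrow>
   \<forall>l\<in>set ((conj1 G c g ^^ a) u). snd l \<in> lower_central G (fst l)"
  by (induction a) (auto simp: conj1_lc)

lemma conjn_prod:
  assumes triv: "lower_central G c = {\<one>}" and g: "g \<in> carrier G"
    and u: "\<forall>l\<in>set u. snd l \<in> lower_central G (fst l)"
  shows "wprod G ((conj1 G c g ^^ a) u) = inv (g [^] a) \<otimes> wprod G u \<otimes> g [^] a"
proof (induction a)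
  case 0
  have "wprod G u \<in> carrier G" using u lc_carrier wprod_closed by blast
  then show ?case by simp
next
  case (Suc a)
  have P: "wprod G u \<in> carrier G" using u lc_carrier wprod_closed by blast
  have "wprod G ((conj1 G c g ^^ Suc a) u) = inv g \<otimes> wprod G ((conj1 G c g ^^ a) u) \<otimes> g"
    using conj1_prod[OF triv g conjn_lc[OF g u, of a]] by simp
  also have "\<dots> = inv g \<otimes> (inv (g [^] a) \<otimes> wprod G u \<otimes> g [^] a) \<otimes> g" by (simp add: Suc)
  also have "\<dots> = inv (g [^] Suc a) \<otimes> wprod G u \<otimes> g [^] Suc a"
    using g P by (simp add: inv_mult_group m_assoc)
  finally show ?case .
qed

lemma conj1_valid:
  assumes S: "S \<subseteq> carrier G" and g: "g \<in> EE G S hg" and h0: "hg \<le> fst l0"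
    and u: "\<forall>l\<in>set u. valid G S l \<and> (l = l0 \<or> fst l0 < fst l)"
  shows "\<forall>l\<in>set (conj1 G c g u). valid G S l \<and> (l = l0 \<or> fst l0 < fst l)"
  using u
proof (induction u)
  case Nil then show ?case by simp
next
  case (Cons l u)
  obtain h x where l: "l = (h,x)" by (cases l)
  have v: "x \<in> EE G S h" "x \<in> lower_central G h" and hl: "fst l0 \<le> h"
    using Cons.prems l by (auto simp: valid_def)
  have gc: "g \<in> carrier G" using g EE_carrier[OF S] by blast
  have "EE G S hg \<subseteq> EE G S h" by (rule EE_mono) (use h0 hl in linarith)
  then have "g \<in> EE G S h" using g by blast
  then have "cm G x g \<in> {cm G x y | x y. x \<in> EE G S h \<and> y \<in> EE G S h}" using v by blast
  then have "cm G x g \<in> EE G S (Suc h)" by simp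
  moreover have "cm G x g \<in> lower_central G (Suc h)" using cm_mem v gc by blast
  ultimately have "valid G S (Suc h, cm G x g)" by (simp add: valid_def)
  then have new: "valid G S (Suc h, cm G x g) \<and> ((Suc h, cm G x g) = l0 \<or> fst l0 < fst (Suc h, cm G x g))"
    using hl by simp
  have hd: "valid G S (h,x) \<and> ((h,x) = l0 \<or> fst l0 < fst (h,x))" using Cons.prems l by simp
  have IH: "\<forall>l\<in>set (conj1 G c g u). valid G S l \<and> (l = l0 \<or> fst l0 < fst l)" using Cons.IH Cons.prems by simp
  have "set (conj1 G c g (l#u)) \<subseteq> {(h,x), (Suc h, cm G x g)} \<union> set (conj1 G c g u)"
    by (auto simp: conj1_Cons l)
  then show ?case using IH hd new by blast
qed

lemma conjn_valid:
  assumes S: "S \<subseteq> carrier G" and g: "g \<in> EE G S hg" and h0: "hg \<le> fst l0" and l0: "valid G S l0"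
  shows "\<forall>l\<in>set ((conj1 G c g ^^ a) [l0]). valid G S l \<and> (l = l0 \<or> fst l0 < fst l)"
proof (induction a)
  case 0 then show ?case using l0 by simp
next
  case (Suc a) then show ?case unfolding funpow.simps(2) o_apply by (rule conj1_valid[OF S g h0])
qed

lemma coll_props:
  assumes triv: "lower_central G c = {\<one>}" and S: "S \<subseteq> carrier G" and g: "g \<in> EE G S hg"
  shows "\<forall>l\<in>set v. valid G S l \<and> hg \<le> fst l \<Longrightarrow> coll G c hg g v = (a, r) \<Longrightarrow>
     a \<le> length v \<and> length r \<le> length v * (length v + 1) ^ c \<and> (wprod G v = g [^] a \<otimes> wprod G r) \<and>
     (\<forall>l\<in>set r. valid G S l \<and> hg \<le> fst l \<and> ((l \<in> set v \<and> l \<noteq> (hg,g)) \<or> hg < fst l))"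
proof (induction v arbitrary: a r)
  case Nil then show ?case by auto
next
  case (Cons l v)
  obtain a' r' where c': "coll G c hg g v = (a', r')" by fastforce
  have IH: "a' \<le> length v \<and> length r' \<le> length v * (length v + 1) ^ c \<and> wprod G v = g [^] a' \<otimes> wprod G r' \<and>
     (\<forall>l\<in>set r'. valid G S l \<and> hg \<le> fst l \<and> ((l \<in> set v \<and> l \<noteq> (hg,g)) \<or> hg < fst l))"
    using Cons.IH[OF _ c'] Cons.prems by auto
  have gc: "g \<in> carrier G" using g EE_carrier[OF S] by blast
  have lcv: "\<forall>l\<in>set (l#v). snd l \<in> carrier G" using Cons.prems by (auto simp: valid_def lc_carrier)
  have lcr: "\<forall>l\<in>set r'. snd l \<in> carrier G" using IH by (auto simp: valid_def lc_carrier)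
  have Pr: "wprod G r' \<in> carrier G" using lcr wprod_closed by blast
  have len1: "length v * (length v + 1) ^ c \<le> length (l#v) * (length (l#v) + 1) ^ c"
    by (intro mult_le_mono power_mono) auto
  show ?case
  proof (cases "l = (hg, g)")
    case True
    then have ar: "a = Suc a'" "r = r'" using Cons.prems c' by auto
    have w1: "wprod G (l # v) = g \<otimes> (g [^] a' \<otimes> wprod G r')" using True IH by simp
    have e: "g [^] a = g \<otimes> g [^] a'" unfolding ar(1) by (rule nat_pow_Suc2[OF gc])
    have "g \<otimes> (g [^] a' \<otimes> wprod G r') = g [^] a \<otimes> wprod G r'" unfolding e using gc Pr by (simp add: m_assoc)
    then show ?thesis using IH ar len1 w1 by auto
  next
    case False
    then have ar: "a = a'" "r = (conj1 G c g ^^ a') [l] @ r'" using Cons.prems c' by auto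
    obtain h x where l: "l = (h,x)" by (cases l)
    have lv: "valid G S l" "hg \<le> h" using Cons.prems l by auto
    have xl: "x \<in> lower_central G h" using lv l by (simp add: valid_def)
    have xc: "x \<in> carrier G" using xl lc_carrier by blast
    have CV: "\<forall>l'\<in>set ((conj1 G c g ^^ a') [l]). valid G S l' \<and> (l' = l \<or> fst l < fst l')"
      using conjn_valid[OF S g _ lv(1)] lv l by auto
    have CL: "\<forall>l'\<in>set ((conj1 G c g ^^ a') [l]). snd l' \<in> carrier G"
      using CV by (auto simp: valid_def lc_carrier)
    have CP: "wprod G ((conj1 G c g ^^ a') [l]) = inv (g [^] a') \<otimes> x \<otimes> g [^] a'"
      using conjn_prod[OF triv gc, of "[l]" a'] xl xc l by simp
    have "wprod G r = wprod G ((conj1 G c g ^^ a') [l]) \<otimes> wprod G r'"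
      using ar wprod_append[OF CL lcr] by simp
    then have "g [^] a \<otimes> wprod G r = g [^] a' \<otimes> (inv (g [^] a') \<otimes> x \<otimes> g [^] a' \<otimes> wprod G r')"
      using CP ar by simp
    also have "\<dots> = x \<otimes> (g [^] a' \<otimes> wprod G r')"
      using gc xc Pr by (simp add: m_assoc inv_cancel_ll)
    also have "\<dots> = wprod G (l # v)" using IH l by simp
    finally have W: "wprod G (l # v) = g [^] a \<otimes> wprod G r" by simp
    have "length ((conj1 G c g ^^ a') [l]) \<le> (a'+1)^(c-h)" using conjn_len l by metis
    also have "\<dots> \<le> (a'+1) ^ c" by (intro power_increasing) auto
    also have "\<dots> \<le> (length v + 1) ^ c" using IH by (intro power_mono) auto
    finally have L1: "length ((conj1 G c g ^^ a') [l]) \<le> (length v + 1) ^ c" .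
    have "length r \<le> (length v + 1) ^ c + length v * (length v + 1) ^ c" using L1 IH ar by simp
    also have "\<dots> = (length v + 1) * (length v + 1) ^ c" by simp
    also have "\<dots> \<le> length (l#v) * (length (l#v) + 1) ^ c" by (intro mult_le_mono power_mono) auto
    finally have L: "length r \<le> length (l#v) * (length (l#v) + 1) ^ c" .
    have R: "\<forall>l'\<in>set r. valid G S l' \<and> hg \<le> fst l' \<and> ((l' \<in> set (l#v) \<and> l' \<noteq> (hg,g)) \<or> hg < fst l')"
    proof
      fix l' assume "l' \<in> set r"
      then consider "l' \<in> set ((conj1 G c g ^^ a') [l])" | "l' \<in> set r'" using ar by auto
      then show "valid G S l' \<and> hg \<le> fst l' \<and> ((l' \<in> set (l#v) \<and> l' \<noteq> (hg,g)) \<or> hg < fst l')"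
      proof cases
        case 1 then show ?thesis using CV False lv l by fastforce
      next
        case 2 then show ?thesis using IH by auto
      qed
    qed
    show ?thesis using IH ar W L R by auto
  qed
qed

lemma arith1: "(n::nat) * (n + 1) ^ c + 1 \<le> (n + 1) ^ Suc c"
proof -
  have "1 \<le> (n + 1) ^ c" by simp
  then show ?thesis by simp
qed

lemma process:
  assumes triv: "lower_central G c = {\<one>}" and S: "S \<subseteq> carrier G"
  shows "sorted (map fst ts) \<Longrightarrow> (\<forall>l\<in>set ts. snd l \<in> EE G S (fst l) \<and> fst l < c) \<Longrightarrow>
    (\<forall>l\<in>set ts. \<forall>h''. fst l < h'' \<and> h'' < c \<longrightarrow> (\<forall>e'\<in>EE G S h''. (h'',e') \<in> set ts)) \<Longrightarrow>
    (\<forall>l\<in>set v. valid G S l \<and> (fst l < c \<longrightarrow> l \<in> set ts)) \<Longrightarrow> length v + 1 \<le> Lb \<Longrightarrow>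
    \<exists>as. length as = length ts \<and> (\<forall>a\<in>set as. a < Lb ^ ((c+1) ^ length ts)) \<and> wprod G v = ppow G (map snd ts) as"
proof (induction ts arbitrary: v Lb)
  case Nil
  have "\<forall>l\<in>set v. snd l = \<one>"
  proof
    fix l assume l: "l \<in> set v"
    then have "snd l \<in> lower_central G (fst l)" "c \<le> fst l" using Nil.prems by (auto simp: valid_def)
    then show "snd l = \<one>" using lc_triv[OF triv] by blast
  qed
  then have "wprod G v = \<one>" by (induction v) auto
  then show ?case by auto
next
  case (Cons t ts')
  obtain hg g where t: "t = (hg, g)" by (cases t)
  obtain a r where ar: "coll G c hg g v = (a, r)" by fastforce
  have srt: "\<forall>l\<in>set ts'. hg \<le> fst l" "sorted (map fst ts')" using Cons.prems(1) t by auto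
  have g: "g \<in> EE G S hg" "hg < c" using Cons.prems(2) t by auto
  have vv: "\<forall>l\<in>set v. valid G S l \<and> hg \<le> fst l"
  proof
    fix l assume "l \<in> set v"
    then show "valid G S l \<and> hg \<le> fst l" using Cons.prems(4) srt g t
      by (cases "fst l < c") auto
  qed
  have CP: "a \<le> length v \<and> length r \<le> length v * (length v + 1) ^ c \<and> wprod G v = g [^] a \<otimes> wprod G r \<and>
     (\<forall>l\<in>set r. valid G S l \<and> hg \<le> fst l \<and> ((l \<in> set v \<and> l \<noteq> (hg,g)) \<or> hg < fst l))"
    using coll_props[OF triv S g(1) vv ar] .
  have P2: "\<forall>l\<in>set ts'. snd l \<in> EE G S (fst l) \<and> fst l < c" using Cons.prems(2) by auto
  have P3: "\<forall>l\<in>set ts'. \<forall>h''. fst l < h'' \<and> h'' < c \<longrightarrow> (\<forall>e'\<in>EE G S h''. (h'',e') \<in> set ts')"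
  proof (intro ballI allI impI)
    fix l h'' e' assume l: "l \<in> set ts'" and h: "fst l < h'' \<and> h'' < c" and e: "e' \<in> EE G S h''"
    then have "(h'', e') \<in> set (t # ts')" using Cons.prems(3) by auto
    moreover have "(h'', e') \<noteq> t" using t srt l h by auto
    ultimately show "(h'', e') \<in> set ts'" by auto
  qed
  have I: "\<forall>l\<in>set r. valid G S l \<and> (fst l < c \<longrightarrow> l \<in> set ts')"
  proof
    fix l assume lr: "l \<in> set r"
    then have vl: "valid G S l" "hg \<le> fst l" "(l \<in> set v \<and> l \<noteq> (hg,g)) \<or> hg < fst l" using CP by auto
    show "valid G S l \<and> (fst l < c \<longrightarrow> l \<in> set ts')"
    proof (intro conjI impI)
      show "valid G S l" by fact
      assume lc: "fst l < c"
      show "l \<in> set ts'"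
        using vl(3)
      proof
        assume "l \<in> set v \<and> l \<noteq> (hg, g)"
        then show ?thesis using Cons.prems(4) lc t by auto
      next
        assume hl: "hg < fst l"
        have "snd l \<in> EE G S (fst l)" using vl(1) by (simp add: valid_def)
        then have "(fst l, snd l) \<in> set (t # ts')"
          using Cons.prems(3)[rule_format, of t "fst l" "snd l"] t hl lc by simp
        then show ?thesis using hl t by auto
      qed
    qed
  qed
  have "length r + 1 \<le> (length v + 1) ^ Suc c"
    using CP arith1[of "length v" c] by linarith
  also have "\<dots> \<le> Lb ^ Suc c" using Cons.prems(5) by (intro power_mono) auto
  finally have lr: "length r + 1 \<le> Lb ^ Suc c" .
  obtain as' where as': "length as' = length ts'" "\<forall>a\<in>set as'. a < (Lb ^ Suc c) ^ ((c+1) ^ length ts')"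
    "wprod G r = ppow G (map snd ts') as'"
    using Cons.IH[OF srt(2) P2 P3 I lr] by blast
  have pw: "(Lb ^ Suc c) ^ ((c+1) ^ length ts') = Lb ^ ((c+1) ^ length (t # ts'))"
  proof -
    have "(c+1) ^ length (t # ts') = Suc c * (c+1) ^ length ts'" by simp
    then show ?thesis by (simp only: power_mult)
  qed
  have Lb1: "1 \<le> Lb" using Cons.prems(5) by simp
  have "a < Lb" using CP Cons.prems(5) by simp
  also have "Lb \<le> Lb ^ ((c+1) ^ length (t # ts'))"
    using Lb1 by (metis power_increasing power_one_right one_le_power le_add2 add.commute le_trans) 
  finally have a: "a < Lb ^ ((c+1) ^ length (t # ts'))" .
  show ?case
  proof (intro exI[of _ "a # as'"] conjI)
    show "length (a # as') = length (t # ts')" using as' by simp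
    show "\<forall>x\<in>set (a # as'). x < Lb ^ ((c + 1) ^ length (t # ts'))" using as' a pw by auto
    show "wprod G v = ppow G (map snd (t # ts')) (a # as')" using CP as' t by simp
  qed
qed

lemma core:
  assumes triv: "lower_central G c = {\<one>}" and S: "S \<subseteq> carrier G" and fS: "finite S"
  shows "\<exists>N. \<forall>k. card (PS G S k) \<le> (k+1) ^ N"
proof -
  define ts where "ts = tsf G S c"
  define N0 where "N0 = length ts"
  define Q where "Q = (c+1) ^ N0"
  have sts: "set ts = {(h,e). h < c \<and> e \<in> EE G S h}" using set_tsf[OF fS] ts_def by simp
  have P1: "sorted (map fst ts)" using sorted_tsf ts_def by simp
  have P2: "\<forall>l\<in>set ts. snd l \<in> EE G S (fst l) \<and> fst l < c" using sts by auto
  have P3: "\<forall>l\<in>set ts. \<forall>h''. fst l < h'' \<and> h'' < c \<longrightarrow> (\<forall>e'\<in>EE G S h''. (h'',e') \<in> set ts)"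
    using sts by auto
  have "card (PS G S k) \<le> (k+1) ^ (Q * N0)" for k
  proof -
    define M where "M = (k+1) ^ Q"
    have sub: "PS G S k \<subseteq> ppow G (map snd ts) ` {as. set as \<subseteq> {..<M} \<and> length as = N0}"
    proof
      fix p assume "p \<in> PS G S k"
      then obtain ws where ws: "set ws \<subseteq> S" "length ws = k" "p = listprod G ws"
        unfolding PS_def by blast
      define v where "v = map (Pair (0::nat)) ws"
      have I: "\<forall>l\<in>set v. valid G S l \<and> (fst l < c \<longrightarrow> l \<in> set ts)"
        using ws(1) S sts by (auto simp: v_def valid_def)
      obtain as where as: "length as = length ts" "\<forall>a\<in>set as. a < (k+1) ^ ((c+1) ^ length ts)"
        "wprod G v = ppow G (map snd ts) as"
        using process[OF triv S P1 P2 P3 I, of "k+1"] ws(2) by (auto simp: v_def)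
      have "p = ppow G (map snd ts) as" using as(3) ws(3) by (simp add: v_def wprod_map0)
      moreover have "set as \<subseteq> {..<M} \<and> length as = N0" using as by (auto simp: M_def Q_def N0_def)
      ultimately show "p \<in> ppow G (map snd ts) ` {as. set as \<subseteq> {..<M} \<and> length as = N0}" by blast
    qed
    have "card (PS G S k) \<le> card (ppow G (map snd ts) ` {as. set as \<subseteq> {..<M} \<and> length as = N0})"
      by (rule card_mono[OF finite_imageI[OF finite_lists_length_eq] sub]) simp
    also have "\<dots> \<le> card {as. set as \<subseteq> {..<M} \<and> length as = N0}" by (rule card_image_le) (simp add: finite_lists_length_eq)
    also have "\<dots> = M ^ N0" by (simp add: card_lists_length_eq)
    also have "\<dots> = (k+1) ^ (Q * N0)" by (simp add: M_def power_mult)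
    finally show ?thesis .
  qed
  then show ?thesis by blast
qed

lemma listprod_Cons: "listprod G (x # ws) = x \<otimes> listprod G ws"
  by (simp add: listprod_def)

lemma listprod_closed: "set ws \<subseteq> carrier G \<Longrightarrow> listprod G ws \<in> carrier G"
  by (induction ws) (auto simp: listprod_def)

lemma virt:
  assumes H: "subgroup H G" and fin: "finite (rcosets H)"
    and K: "group (G\<lparr>carrier := H\<rparr>)" and triv: "lower_central (G\<lparr>carrier := H\<rparr>) c = {\<one>}"
    and S: "S \<subseteq> carrier G" and fS: "finite S"
  shows "\<exists>C N. \<forall>k. card (PS G S k) \<le> C * (k+1) ^ N"
proof -
  define \<tau> where "\<tau> x = (SOME y. y \<in> H #> x)" for x
  have tau: "\<tau> x \<in> carrier G \<and> x \<otimes> inv (\<tau> x) \<in> H" if x: "x \<in> carrier G" for x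
  proof -
    have "x \<in> H #> x" using rcos_self[OF x H] .
    then have "\<tau> x \<in> H #> x" unfolding \<tau>_def by (rule someI)
    then obtain h where h: "h \<in> H" "\<tau> x = h \<otimes> x" unfolding r_coset_def by blast
    have hc: "h \<in> carrier G" using subgroup.mem_carrier[OF H h(1)] .
    have "x \<otimes> inv (\<tau> x) = inv h" unfolding h(2) using hc x by (simp add: inv_mult_group inv_cancel_ll)
    moreover have "inv h \<in> H" using subgroup.m_inv_closed[OF H h(1)] .
    moreover have "\<tau> x \<in> carrier G" unfolding h(2) using hc x by simp
    ultimately show ?thesis by simp
  qed
  define T where "T = insert \<one> (\<tau> ` carrier G)"
  have Tc: "T \<subseteq> carrier G" using tau by (auto simp: T_def)
  have fT: "finite T"
  proof -
    have "\<tau> ` carrier G \<subseteq> (\<lambda>C. SOME y. y \<in> C) ` (rcosets H)"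
    proof (rule image_subsetI)
      fix x assume "x \<in> carrier G"
      then have "H #> x \<in> rcosets H" unfolding RCOSETS_def by blast
      then show "\<tau> x \<in> (\<lambda>C. SOME y. y \<in> C) ` (rcosets H)" unfolding \<tau>_def by (rule image_eqI[rotated]) simp
    qed
    then show ?thesis unfolding T_def using fin finite_subset by blast
  qed
  define S' where "S' = {t \<otimes> s \<otimes> inv (\<tau> (t \<otimes> s)) | t s. t \<in> T \<and> s \<in> S}"
  have fS': "finite S'" unfolding S'_def
    by (rule finite_image_set2[where f="\<lambda>t s. t \<otimes> s \<otimes> inv (\<tau> (t \<otimes> s))" and P="\<lambda>t. t \<in> T" and Q="\<lambda>s. s \<in> S"]) (use fT fS in simp_all)
  have S'H: "S' \<subseteq> H"
  proof
    fix y assume "y \<in> S'"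
    then obtain t s where ts: "y = t \<otimes> s \<otimes> inv (\<tau> (t \<otimes> s))" "t \<in> T" "s \<in> S" unfolding S'_def by blast
    have "t \<otimes> s \<in> carrier G" using ts Tc S by blast
    then show "y \<in> H" using tau ts(1) by simp
  qed
  have HG: "H \<subseteq> carrier G" using H subgroup.subset by blast
  have tele: "\<forall>t\<in>T. \<exists>ws'. set ws' \<subseteq> S' \<and> length ws' = length ws \<and> (\<exists>t'\<in>T. t \<otimes> listprod G ws = listprod G ws' \<otimes> t')"
    if "set ws \<subseteq> S" for ws
    using that
  proof (induction ws)
    case Nil
    show ?case
    proof
      fix t assume "t \<in> T"
      then show "\<exists>ws'. set ws' \<subseteq> S' \<and> length ws' = length [] \<and> (\<exists>t'\<in>T. t \<otimes> listprod G [] = listprod G ws' \<otimes> t')"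
      proof (intro exI[of _ "[]"] conjI bexI[of _ t])
        show "t \<otimes> listprod G [] = listprod G [] \<otimes> t" using Tc \<open>t \<in> T\<close> by (auto simp: listprod_def)
      qed (use \<open>t \<in> T\<close> in auto)
    qed
  next
    case (Cons s ws)
    show ?case
    proof
      fix t assume t: "t \<in> T"
      have s: "s \<in> S" "s \<in> carrier G" using Cons.prems S by auto
      have tc: "t \<in> carrier G" using t Tc by blast
      define u where "u = \<tau> (t \<otimes> s)"
      have u: "u \<in> T" "u \<in> carrier G" using tau[of "t \<otimes> s"] tc s by (auto simp: T_def u_def)
      obtain ws'' t'' where w: "set ws'' \<subseteq> S'" "length ws'' = length ws" "t'' \<in> T"
        "u \<otimes> listprod G ws = listprod G ws'' \<otimes> t''"
        using Cons.IH Cons.prems u(1) by auto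
      define x where "x = t \<otimes> s \<otimes> inv u"
      have x: "x \<in> S'" unfolding x_def S'_def u_def
        by (intro CollectI exI[of _ t] exI[of _ s] conjI refl t s(1))
      have xc: "x \<in> carrier G" using x S'H HG by blast
      have wsc: "listprod G ws \<in> carrier G" using Cons.prems S by (intro listprod_closed) auto
      have w''c: "listprod G ws'' \<in> carrier G" using w(1) S'H HG by (intro listprod_closed) auto
      have t''c: "t'' \<in> carrier G" using w(3) Tc by blast
      have "t \<otimes> listprod G (s # ws) = x \<otimes> (u \<otimes> listprod G ws)"
        using tc s u wsc by (simp add: listprod_Cons x_def m_assoc inv_cancel_ll')
      also have "\<dots> = listprod G (x # ws'') \<otimes> t''"
        using w(4) xc w''c t''c by (simp add: listprod_Cons m_assoc)
      finally show "\<exists>ws'. set ws' \<subseteq> S' \<and> length ws' = length (s # ws) \<and> (\<exists>t'\<in>T. t \<otimes> listprod G (s # ws) = listprod G ws' \<otimes> t')"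
        using w x by (intro exI[of _ "x # ws''"]) auto
    qed
  qed
  interpret K: group "G\<lparr>carrier := H\<rparr>" by (rule K)
  have triv': "lower_central (G\<lparr>carrier := H\<rparr>) c = {\<one>\<^bsub>G\<lparr>carrier := H\<rparr>\<^esub>}" using triv by simp
  obtain N where N: "\<forall>k. card (PS (G\<lparr>carrier := H\<rparr>) S' k) \<le> (k+1) ^ N"
    using K.core[OF triv' _ fS'] S'H by auto
  have PSeq: "PS (G\<lparr>carrier := H\<rparr>) S' k = PS G S' k" for k
    by (simp add: PS_def listprod_def)
  have "card (PS G S k) \<le> card T * (k+1) ^ N" for k
  proof -
    have fL: "finite (PS G S' k)"
    proof -
      have "PS G S' k = listprod G ` {ws. set ws \<subseteq> S' \<and> length ws = k}" by (auto simp: PS_def)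
      then show ?thesis using finite_lists_length_eq[OF fS'] by simp
    qed
    have sub: "PS G S k \<subseteq> (\<lambda>(p,t). p \<otimes> t) ` (PS G S' k \<times> T)"
    proof
      fix p assume "p \<in> PS G S k"
      then obtain ws where ws: "set ws \<subseteq> S" "length ws = k" "p = listprod G ws" by (auto simp: PS_def)
      obtain ws' t' where w: "set ws' \<subseteq> S'" "length ws' = k" "t' \<in> T" "\<one> \<otimes> listprod G ws = listprod G ws' \<otimes> t'"
        using tele[OF ws(1)] ws(2) by (auto simp: T_def)
      have "p = listprod G ws' \<otimes> t'" using w(4) ws S by (simp add: listprod_closed)
      moreover have "listprod G ws' \<in> PS G S' k" using w by (auto simp: PS_def)
      ultimately show "p \<in> (\<lambda>(p,t). p \<otimes> t) ` (PS G S' k \<times> T)" using w(3)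
        by (intro image_eqI[of _ _ "(listprod G ws', t')"]) auto
    qed
    have "card (PS G S k) \<le> card ((\<lambda>(p,t). p \<otimes> t) ` (PS G S' k \<times> T))"
      by (rule card_mono[OF _ sub]) (use fL fT in simp)
    also have "\<dots> \<le> card (PS G S' k \<times> T)" by (rule card_image_le) (use fL fT in simp)
    also have "\<dots> = card (PS G S' k) * card T" by (simp add: card_cartesian_product)
    also have "\<dots> \<le> (k+1) ^ N * card T" using N PSeq by (intro mult_le_mono1) metis
    finally show ?thesis by (simp add: mult.commute)
  qed
  then show ?thesis by blast
qed

lemma listprod_snoc: "set ws \<subseteq> carrier G \<Longrightarrow> s \<in> carrier G \<Longrightarrow>
    listprod G (ws @ [s]) = listprod G ws \<otimes> s"
  by (induction ws) (auto simp: listprod_Cons listprod_closed m_assoc, simp add: listprod_def)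

lemmas G_is_group = is_group

lemma dyn_sub:
  assumes A: "subgroup A (AutoGroup G)" and fA: "finite A"
    and h: "h \<in> carrier G" "orb A h = z" "h = (SOME h. h \<in> carrier G \<and> orb A h = z)"
    and y0: "y0 \<in> carrier G" "orb A y0 = y"
  shows "set_mset (dyn_iter G A z r y) \<subseteq> (\<lambda>p. orb A (y0 \<otimes>\<^bsub>G\<^esub> p)) ` PS G ((\<lambda>a. a h) ` A) r"
proof (induction r)
  case 0
  have "[] \<in> {ws. set ws \<subseteq> (\<lambda>a. a h) ` A \<and> length ws = 0}" by simp
  then have "\<one> \<in> PS G ((\<lambda>a. a h) ` A) 0" unfolding PS_def listprod_def by force
  then show ?case using y0 by (auto intro!: image_eqI[of _ _ \<one>])
next
  case (Suc r)
  let ?S = "(\<lambda>a. a h) ` A"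
  have Sc: "?S \<subseteq> carrier G" using auto_facts(1)[OF is_group A] h(1) by (auto simp: hom_def)
  show ?case
  proof
    fix x' assume "x' \<in> set_mset (dyn_iter G A z (Suc r) y)"
    then obtain x where x: "x \<in> set_mset (dyn_iter G A z r y)" "x' \<in> set_mset (cmult G A x z)"
      by (auto simp: cmult_mset_def)
    then obtain p where p: "p \<in> PS G ?S r" "x = orb A (y0 \<otimes> p)" using Suc by blast
    obtain ws where ws: "set ws \<subseteq> ?S" "length ws = r" "p = listprod G ws" using p(1) unfolding PS_def by blast
    have pc: "p \<in> carrier G" using ws Sc listprod_closed by blast
    define g where "g = (SOME g. g \<in> carrier G \<and> orb A g = x)"
    have "\<exists>g. g \<in> carrier G \<and> orb A g = x" using p(2) pc y0 by blast
    then have g: "g \<in> carrier G" "orb A g = x" unfolding g_def by (metis (mono_tags, lifting) someI_ex)+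
    have "x' \<in> (\<lambda>a. orb A (g \<otimes> a h)) ` A"
      using x(2) fA unfolding cmult_def Let_def g_def[symmetric] h(3)[symmetric] by simp
    then obtain a where a: "a \<in> A" "x' = orb A (g \<otimes> a h)" by blast
    have "g \<in> orb A (y0 \<otimes> p)" using orb_self[OF is_group A g(1)] g(2) p(2) by simp
    then obtain b where b: "b \<in> A" "g = b (y0 \<otimes> p)" unfolding orb_def by blast
    define c where "c = inv\<^bsub>AutoGroup G\<^esub> b \<otimes>\<^bsub>AutoGroup G\<^esub> a"
    have c: "c \<in> A" unfolding c_def using auto_facts(3)[OF is_group A auto_facts(4)[OF is_group A b(1)] a(1) h(1)] by blast
    have "a h = (b \<otimes>\<^bsub>AutoGroup G\<^esub> c) h" unfolding c_def using auto_facts(5)[OF is_group A b(1) a(1)] by simp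
    also have "\<dots> = b (c h)" using auto_facts(3)[OF is_group A b(1) c h(1)] by simp
    finally have ah: "a h = b (c h)" .
    have ch: "c h \<in> carrier G" using auto_facts(1)[OF is_group A c] h(1) by (auto simp: hom_def)
    have bhom: "b \<in> hom G G" using auto_facts(1)[OF is_group A b(1)] .
    have "g \<otimes> a h = b (y0 \<otimes> p \<otimes> c h)"
      unfolding b(2) ah using hom_mult[OF bhom] y0 pc ch by simp
    then have "x' = orb A (y0 \<otimes> (p \<otimes> c h))"
      using a(2) orb_shift[OF is_group A b(1)] y0 pc ch by (simp add: m_assoc)
    moreover have "p \<otimes> c h \<in> PS G ?S (Suc r)"
    proof -
      have "listprod G (ws @ [c h]) = p \<otimes> c h" using listprod_snoc ws Sc ch by auto
      moreover have "set (ws @ [c h]) \<subseteq> ?S" "length (ws @ [c h]) = Suc r" using ws c by auto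
      ultimately show ?thesis unfolding PS_def by (intro CollectI exI[of _ "ws @ [c h]"]) simp
    qed
    ultimately show "x' \<in> (\<lambda>p. orb A (y0 \<otimes> p)) ` PS G ?S (Suc r)" by blast
  qed
qed

end

theorem mainTheorem3:
  fixes G :: "('a, 'b) monoid_scheme" and A :: "('a \<Rightarrow> 'a) set" and n :: nat
  assumes "group G"
    and "fin_gen_group G"
    and "virtually_nilpotent G"
    and "subgroup A (AutoGroup G)"
    and "finite A" and "card A = n"
    and "z \<in> coset_space G A" and "y \<in> coset_space G A"
  shows "\<exists>C k. C > 0 \<and> k > 0 \<and>
           (\<forall>r::nat. r \<ge> 1 \<longrightarrow> real (growth G A z y r) \<le> C * real r ^ k)"
proof -
  note G = assms(1) and A = assms(4) and fA = assms(5)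
  obtain H where H: "subgroup H G" "finite (rcosets\<^bsub>G\<^esub> H)" "nilpotent_group (G\<lparr>carrier := H\<rparr>)"
    using assms(3) unfolding virtually_nilpotent_def by blast
  obtain c where K: "group (G\<lparr>carrier := H\<rparr>)" and triv0: "lower_central (G\<lparr>carrier := H\<rparr>) c = {\<one>\<^bsub>G\<lparr>carrier := H\<rparr>\<^esub>}"
    using H(3) unfolding nilpotent_group_def by blast
  have triv: "lower_central (G\<lparr>carrier := H\<rparr>) c = {\<one>\<^bsub>G\<^esub>}" using triv0 by simp
  define h where "h = (SOME h. h \<in> carrier G \<and> orb A h = z)"
  have "\<exists>h. h \<in> carrier G \<and> orb A h = z" using assms(7) unfolding coset_space_def by blast
  then have hh: "h \<in> carrier G" "orb A h = z" unfolding h_def by (metis (mono_tags, lifting) someI_ex)+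
  obtain y0 where y0: "y0 \<in> carrier G" "orb A y0 = y" using assms(8) unfolding coset_space_def by blast
  define S where "S = (\<lambda>a. a h) ` A"
  have Sc: "S \<subseteq> carrier G" using auto_facts(1)[OF G A] hh(1) by (auto simp: hom_def S_def)
  have fS: "finite S" using fA by (simp add: S_def)
  obtain C N where CN: "\<forall>k. card (PS G S k) \<le> C * (k+1) ^ N"
    using group.virt[OF G H(1) H(2) K triv Sc fS] by blast
  have gr: "growth G A z y r \<le> card (PS G S r)" for r
  proof -
    have fP: "finite (PS G S r)"
    proof -
      have "PS G S r = listprod G ` {ws. set ws \<subseteq> S \<and> length ws = r}" by (auto simp: PS_def)
      then show ?thesis using finite_lists_length_eq[OF fS] by simp
    qed
    have "growth G A z y r \<le> card ((\<lambda>p. orb A (y0 \<otimes>\<^bsub>G\<^esub> p)) ` PS G S r)"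
      unfolding growth_def S_def
      by (rule card_mono[OF _ group.dyn_sub[OF G A fA hh h_def y0]]) (use fP in \<open>simp add: S_def\<close>)
    also have "\<dots> \<le> card (PS G S r)" by (rule card_image_le[OF fP])
    finally show ?thesis .
  qed
  have bound: "growth G A z y r \<le> C * 2 ^ N * r ^ (N+1)" if r: "r \<ge> 1" for r
  proof -
    have "growth G A z y r \<le> C * (r+1) ^ N" using gr CN le_trans by blast
    also have "\<dots> \<le> C * (2 * r) ^ N" using r by (intro mult_le_mono2 power_mono) auto
    also have "\<dots> = C * 2 ^ N * r ^ N" by (simp add: power_mult_distrib)
    also have "\<dots> \<le> C * 2 ^ N * r ^ (N+1)" using r by (intro mult_le_mono2 power_increasing) auto
    finally show ?thesis .
  qed
  show ?thesis
  proof (intro exI[of _ "real (C * 2 ^ N) + 1"] exI[of _ "N+1"] conjI allI impI)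
    show "0 < real (C * 2 ^ N) + 1" by (simp only: of_nat_0_le_iff add_nonneg_pos zero_less_one)
    show "0 < N + 1" by simp
    fix r :: nat assume r: "1 \<le> r"
    have "real (growth G A z y r) \<le> real (C * 2 ^ N * r ^ (N+1))" using bound[OF r] by linarith
    also have "\<dots> = real (C * 2 ^ N) * real r ^ (N+1)" by simp
    also have "\<dots> \<le> (real (C * 2 ^ N) + 1) * real r ^ (N+1)" by (intro mult_right_mono) auto
    finally show "real (growth G A z y r) \<le> (real (C * 2 ^ N) + 1) * real r ^ (N + 1)" .
  qed
qed

end
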